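(* Let $b\ge2$ be an integer. (1) For any nonempty subset $S$ of $\mathbb{Z}$, the $b$-exponent sequence $(\alpha_k(S,b))_{k=0}^\infty$ is weakly increasing: $\alpha_{k+1}(S,b)\ge\alpha_k(S,b)$ for all $k\ge0$. (2) For any nonempty subset $S$ of $\mathbb{Z}$ and any nonnegative integers $k,\ell$, $\alpha_{k+\ell}(S,b)\ge\alpha_k(S,b)+\alpha_\ell(S,b)$. (3) If $S_1\subseteq S_2\subseteq\mathbb{Z}$ with $S_1$ nonempty, then $\alpha_k(S_1,b)\ge\alpha_k(S_2,b)$ for every $k\ge0$.
   Context: For $b\ge2$ and $a\in\mathbb{Z}$, $\operatorname{ord}_b(a)$ is the largest $k\in\mathbb{N}$ with $b^k\mid a$ ($+\infty$ for $a=0$). For nonempty $S\subseteq\mathbb{Z}$, a $b$-ordering of $S$ is a sequence $(a_i)_{i\ge0}$ in $S$ such that for each $i\ge1$, $a_i$ attains $\min_{a'\in S}\sum_{j=0}^{i-1}\operatorname{ord}_b(a'-a_j)$; the $b$-exponent sequence of $S$ is $\alpha_k(S,b):=\sum_{j=0}^{k-1}\operatorname{ord}_b(a_k-a_j)$ for any $b$-ordering (independent of the choice). *)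

theory Defs
  imports Main "HOL-Library.Extended_Nat"
begin

definition ordb :: "int \<Rightarrow> int \<Rightarrow> enat" where
  "ordb b a = (if a = 0 then \<infinity> else enat (GREATEST k. b ^ k dvd a))"

definition b_ordering :: "int set \<Rightarrow> int \<Rightarrow> (nat \<Rightarrow> int) \<Rightarrow> bool" where
  "b_ordering S b a \<longleftrightarrow>
     (\<forall>i. a i \<in> S) \<and>
     (\<forall>i\<ge>1. \<forall>a'\<in>S. (\<Sum>j<i. ordb b (a i - a j)) \<le> (\<Sum>j<i. ordb b (a' - a j)))"

definition alpha :: "int set \<Rightarrow> int \<Rightarrow> nat \<Rightarrow> enat" where
  "alpha S b k = (SOME v. \<exists>a. b_ordering S b a \<and> v = (\<Sum>j<k. ordb b (a k - a j)))"

end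

theory Submission imports Defs begin
lemma ordb_zero: "ordb b 0 = \<infinity>" by (simp add: ordb_def)

lemma ordb_nodvd: assumes "b \<ge> 2" "\<not> b dvd z" shows "ordb b z = 0"
proof -
  have z: "z \<noteq> 0" using assms by auto
  have "(GREATEST k. b ^ k dvd z) = 0"
  proof (rule Greatest_equality)
    show "b ^ 0 dvd z" by simp
  next
    fix y assume "b ^ y dvd z"
    show "y \<le> 0"
    proof (rule ccontr)
      assume "\<not> y \<le> 0"
      then have "b dvd b ^ y" by (simp add: dvd_power)
      with \<open>b ^ y dvd z\<close> assms(2) show False using dvd_trans by blast
    qed
  qed
  then show ?thesis using z by (simp add: ordb_def zero_enat_def)
qed

lemma pow_bound: assumes "(b::int) \<ge> 2" "b ^ k dvd z" "z \<noteq> 0" shows "k \<le> nat \<bar>z\<bar>"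
proof -
  have "\<bar>b ^ k\<bar> \<le> \<bar>z\<bar>" using dvd_imp_le_int[OF assms(3) assms(2)] .
  moreover have "\<bar>b ^ k\<bar> = b ^ k" using assms(1) by simp
  moreover have "k < (2::nat) ^ k" by (rule less_exp)
  then have "int k < 2 ^ k" by (metis of_nat_less_iff of_nat_numeral of_nat_power)
  moreover have "(2::int) ^ k \<le> b ^ k" using assms(1) by (intro power_mono) auto
  ultimately show ?thesis by linarith
qed

lemma ordb_mult: assumes "b \<ge> 2" shows "ordb b (b * z) = eSuc (ordb b z)"
proof (cases "z = 0")
  case True then show ?thesis by (simp add: ordb_def)
next
  case False
  have bz: "b * z \<noteq> 0" using False assms by simp
  let ?G = "GREATEST k. b ^ k dvd z"
  have G: "b ^ ?G dvd z"
    by (rule GreatestI_nat[of _ 0 "nat \<bar>z\<bar>"]) (use pow_bound[OF assms _ False] in auto)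
  have Gmax: "\<And>y. b ^ y dvd z \<Longrightarrow> y \<le> ?G"
    by (rule Greatest_le_nat[of _ _ "nat \<bar>z\<bar>"]) (use pow_bound[OF assms _ False] in auto)
  have "(GREATEST k. b ^ k dvd b * z) = Suc ?G"
  proof (rule Greatest_equality)
    show "b ^ Suc ?G dvd b * z" using G by simp
  next
    fix y assume y: "b ^ y dvd b * z"
    show "y \<le> Suc ?G"
    proof (cases y)
      case (Suc y')
      then have "b ^ y' dvd z" using y assms by simp
      then show ?thesis using Gmax Suc by auto
    qed simp
  qed
  then show ?thesis using False bz by (simp add: ordb_def eSuc_enat)
qed

lemma ordb_dvd_ge1: assumes "b \<ge> 2" "b dvd z" shows "1 \<le> ordb b z"
proof -
  obtain w where "z = b * w" using assms by blast
  then show ?thesis using ordb_mult[OF assms(1)] by (simp add: eSuc_plus_1)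
qed


definition F :: "int \<Rightarrow> int list \<Rightarrow> int \<Rightarrow> enat" where
  "F b xs x = sum_list (map (\<lambda>y. ordb b (x - y)) xs)"

definition greedy :: "int \<Rightarrow> int set \<Rightarrow> int list \<Rightarrow> bool" where
  "greedy b S xs \<longleftrightarrow> set xs \<subseteq> S \<and>
     (\<forall>i<length xs. \<forall>y\<in>S. F b (take i xs) (xs ! i) \<le> F b (take i xs) y)"

lemma F_Nil[simp]: "F b [] x = 0" by (simp add: F_def)
lemma F_Cons: "F b (y # ys) x = ordb b (x - y) + F b ys x" by (simp add: F_def)
lemma F_append: "F b (xs @ ys) x = F b xs x + F b ys x" by (simp add: F_def)

lemma greedy_snoc:
  "greedy b S (xs @ [x]) \<longleftrightarrow> greedy b S xs \<and> x \<in> S \<and> (\<forall>y\<in>S. F b xs x \<le> F b xs y)"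
proof -
  have A: "(\<forall>i<length (xs @ [x]). P i) \<longleftrightarrow> (\<forall>i<length xs. P i) \<and> P (length xs)" for P
    by (auto simp: less_Suc_eq)
  show ?thesis unfolding greedy_def A
    by (auto simp: nth_append)
qed

lemma greedy_append: "greedy b S (xs @ ys) \<Longrightarrow> greedy b S xs"
  by (induction ys rule: rev_induct) (auto simp: greedy_snoc simp flip: append_assoc)

lemma greedy_take: "greedy b S xs \<Longrightarrow> greedy b S (take n xs)"
  by (metis append_take_drop_id greedy_append)

lemma greedy_mono_step:
  assumes "greedy b S xs" "Suc i < length xs"
  shows "F b (take i xs) (xs ! i) \<le> F b (take (Suc i) xs) (xs ! Suc i)"
proof -
  have "xs ! Suc i \<in> S" using assms unfolding greedy_def by auto
  then have "F b (take i xs) (xs ! i) \<le> F b (take i xs) (xs ! Suc i)"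
    using assms unfolding greedy_def by auto
  also have "\<dots> \<le> F b (take i xs) (xs ! Suc i) + ordb b (xs ! Suc i - xs ! i)" by simp
  also have "\<dots> = F b (take (Suc i) xs) (xs ! Suc i)"
    using assms by (simp add: take_Suc_conv_app_nth F_append F_def)
  finally show ?thesis .
qed

lemma greedy_mono:
  assumes "greedy b S xs" "i \<le> j" "j < length xs"
  shows "F b (take i xs) (xs ! i) \<le> F b (take j xs) (xs ! j)"
  using assms(2,3)
proof (induction j rule: dec_induct)
  case (step j)
  then show ?case using greedy_mono_step[OF assms(1), of j] by auto
qed simp

lemma find_j: "m < length (filter Q cs) \<Longrightarrow>
   \<exists>j<length cs. Q (cs ! j) \<and> length (filter Q (take j cs)) = m"
proof (induction cs arbitrary: m)
  case (Cons y ys)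
  show ?case
  proof (cases "Q y")
    case True
    show ?thesis
    proof (cases m)
      case 0 then show ?thesis using True by (intro exI[of _ 0]) auto
    next
      case (Suc m')
      then obtain j where "j < length ys" "Q (ys ! j)" "length (filter Q (take j ys)) = m'"
        using Cons True by auto
      then show ?thesis using True Suc by (intro exI[of _ "Suc j"]) auto
    qed
  next
    case False
    then obtain j where "j < length ys" "Q (ys ! j)" "length (filter Q (take j ys)) = m"
      using Cons by auto
    then show ?thesis using False by (intro exI[of _ "Suc j"]) auto
  qed
qed simp

lemma sum_classes:
  assumes "(b::int) > 0"
  shows "(\<Sum>r\<in>{0..<b}. length (filter (\<lambda>x. x mod b = r) xs)) = length xs"
proof (induction xs)
  case (Cons y ys)
  have "(\<Sum>r\<in>{0..<b}. length (filter (\<lambda>x. x mod b = r) (y # ys)))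
      = (\<Sum>r\<in>{0..<b}. (if y mod b = r then 1 else 0) + length (filter (\<lambda>x. x mod b = r) ys))"
    by (intro sum.cong) auto
  also have "\<dots> = (\<Sum>r\<in>{0..<b}. (if y mod b = r then 1 else 0)) + length ys"
    using Cons by (simp add: sum.distrib)
  also have "(\<Sum>r\<in>{0..<b}. (if y mod b = r then 1 else 0)) = (1::nat)"
    using assms by (simp add: sum.delta)
  finally show ?case by simp
qed simp

context
  fixes b :: int
  assumes b: "b \<ge> 2"
begin

lemma F_filter:
  assumes "x mod b = r"
  shows "F b xs x = F b (filter (\<lambda>y. y mod b = r) xs) x"
proof (induction xs)
  case (Cons y ys)
  show ?case
  proof (cases "y mod b = r")
    case False
    then have "\<not> b dvd (x - y)" using assms mod_eq_dvd_iff by metis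
    then have "ordb b (x - y) = 0" using ordb_nodvd b by blast
    then show ?thesis using Cons False by (simp add: F_Cons)
  qed (use Cons in \<open>simp add: F_Cons\<close>)
qed simp

lemma F_zero:
  assumes "\<forall>y\<in>set xs. y mod b \<noteq> x mod b"
  shows "F b xs x = 0"
  using assms
proof (induction xs)
  case (Cons y ys)
  then have "\<not> b dvd (x - y)" using mod_eq_dvd_iff by (metis list.set_intros(1))
  then have "ordb b (x - y) = 0" using ordb_nodvd b by blast
  then show ?case using Cons by (simp add: F_Cons)
qed simp

lemma greedy_filter:
  "greedy b S xs \<Longrightarrow> greedy b {x\<in>S. x mod b = r} (filter (\<lambda>x. x mod b = r) xs)"
proof (induction xs rule: rev_induct)
  case (snoc x xs)
  then have g: "greedy b S xs" "x \<in> S" "\<forall>y\<in>S. F b xs x \<le> F b xs y"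
    by (auto simp: greedy_snoc)
  show ?case
  proof (cases "x mod b = r")
    case True
    have "\<forall>y\<in>{x\<in>S. x mod b = r}. F b (filter (\<lambda>x. x mod b = r) xs) x
              \<le> F b (filter (\<lambda>x. x mod b = r) xs) y"
    proof
      fix y assume y: "y \<in> {x\<in>S. x mod b = r}"
      have "F b xs x \<le> F b xs y" using g(3) y by auto
      moreover have "F b xs x = F b (filter (\<lambda>x. x mod b = r) xs) x" by (rule F_filter[OF True])
      moreover have "F b xs y = F b (filter (\<lambda>x. x mod b = r) xs) y" by (rule F_filter) (use y in auto)
      ultimately show "F b (filter (\<lambda>x. x mod b = r) xs) x \<le> F b (filter (\<lambda>x. x mod b = r) xs) y" by simp
    qed
    then show ?thesis using snoc.IH g True by (simp add: greedy_snoc)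
  next
    case False
    then show ?thesis using snoc.IH g by simp
  qed
qed (simp add: greedy_def)

lemma F_scale:
  assumes "\<forall>y\<in>set ys. y mod b = x mod b"
  shows "F b ys x = F b (map (\<lambda>z. z div b) ys) (x div b) + enat (length ys)"
  using assms
proof (induction ys)
  case (Cons y ys)
  have hx: "b * (x div b) + x mod b = x" by (rule mult_div_mod_eq)
  have hy: "b * (y div b) + y mod b = y" by (rule mult_div_mod_eq)
  have m: "y mod b = x mod b" using Cons.prems by simp
  have d: "b * (x div b - y div b) = b * (x div b) - b * (y div b)" by (simp add: right_diff_distrib)
  have "x - y = b * (x div b - y div b)" using hx hy m d by linarith
  then have o: "ordb b (x - y) = ordb b (x div b - y div b) + 1"
    using ordb_mult[OF b] by (simp add: eSuc_plus_1)
  have ih: "F b ys x = F b (map (\<lambda>z. z div b) ys) (x div b) + enat (length ys)"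
    using Cons by simp
  have "F b (y # ys) x = (ordb b (x div b - y div b) + F b (map (\<lambda>z. z div b) ys) (x div b)) + (1 + enat (length ys))"
    unfolding F_Cons o ih by (simp only: ac_simps)
  also have "(1::enat) + enat (length ys) = enat (length (y # ys))" by (simp add: one_enat_def)
  finally show ?case by (simp add: F_Cons)
qed (simp add: zero_enat_def)

lemma greedy_scale:
  assumes g: "greedy b S xs" and cls: "\<forall>x\<in>S. x mod b = r"
  shows "greedy b ((\<lambda>z. z div b) ` S) (map (\<lambda>z. z div b) xs)"
  unfolding greedy_def
proof (intro conjI allI impI ballI)
  show "set (map (\<lambda>z. z div b) xs) \<subseteq> (\<lambda>z. z div b) ` S" using g by (auto simp: greedy_def)
next
  fix i y' assume i: "i < length (map (\<lambda>z. z div b) xs)" and y': "y' \<in> (\<lambda>z. z div b) ` S"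
  obtain y where y: "y \<in> S" "y' = y div b" using y' by auto
  have sub: "set (take i xs) \<subseteq> S" using g by (auto simp: greedy_def dest: in_set_takeD)
  have xi: "xs ! i \<in> S" using g i by (auto simp: greedy_def)
  have c1: "\<forall>z\<in>set (take i xs). z mod b = (xs ! i) mod b" using sub xi cls by auto
  have c2: "\<forall>z\<in>set (take i xs). z mod b = y mod b" using sub y cls by auto
  have "F b (take i xs) (xs ! i) \<le> F b (take i xs) y" using g i y by (auto simp: greedy_def)
  then have "F b (map (\<lambda>z. z div b) (take i xs)) (xs ! i div b) + enat (length (take i xs))
     \<le> F b (map (\<lambda>z. z div b) (take i xs)) (y div b) + enat (length (take i xs))"
    using F_scale[OF c1] F_scale[OF c2] by simp
  then have "F b (map (\<lambda>z. z div b) (take i xs)) (xs ! i div b)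
     \<le> F b (map (\<lambda>z. z div b) (take i xs)) (y div b)"
    by (metis add.commute enat_add_left_cancel_le enat.distinct(2))
  moreover have e1: "take i (map (\<lambda>z. z div b) xs) = map (\<lambda>z. z div b) (take i xs)" by (rule take_map)
  moreover have e2: "map (\<lambda>z. z div b) xs ! i = xs ! i div b" using i by simp
  ultimately show "F b (take i (map (\<lambda>z. z div b) xs)) (map (\<lambda>z. z div b) xs ! i)
          \<le> F b (take i (map (\<lambda>z. z div b) xs)) y'" using y(2) by (simp only:)
qed

lemma K_aux:
  assumes IHk: "\<And>S cs c ts. length cs < k \<Longrightarrow> greedy b S (cs @ [c]) \<Longrightarrow> length ts \<le> length cs
                  \<Longrightarrow> \<exists>x\<in>S. F b ts x \<le> F b cs c"
  shows "length cs = k \<Longrightarrow> F b cs c = enat v \<Longrightarrow> greedy b S (cs @ [c]) \<Longrightarrow> length ts \<le> k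
          \<Longrightarrow> \<exists>x\<in>S. F b ts x \<le> F b cs c"
proof (induction v arbitrary: S cs c ts rule: less_induct)
  case (less v)
  have g: "greedy b S cs" "c \<in> S" "\<forall>y\<in>S. F b cs c \<le> F b cs y"
    using less.prems(3) by (auto simp: greedy_snoc)
  have csS: "set cs \<subseteq> S" using g(1) by (simp add: greedy_def)
  show ?case
  proof (cases "cs = []")
    case True
    then show ?thesis using less.prems g(2) by (intro bexI[of _ c]) auto
  next
    case csne: False
    define \<rho> where "\<rho> = c mod b"
    define P where "P = (\<lambda>x::int. x mod b = \<rho>)"
    show ?thesis
    proof (cases "\<forall>x\<in>S. x mod b = \<rho>")
      case True
      define h where "h = (\<lambda>z::int. z div b)"
      have gs: "greedy b (h ` S) (map h cs @ [h c])"
        using greedy_scale[OF less.prems(3) True] by (simp add: h_def)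
      have cl: "\<forall>y\<in>set cs. y mod b = c mod b" using csS True \<rho>_def by auto
      have Fs: "F b cs c = F b (map h cs) (h c) + enat k"
        using F_scale[OF cl] less.prems(1) by (simp add: h_def)
      obtain v' where v': "F b (map h cs) (h c) = enat v'"
        using Fs less.prems(2) by (cases "F b (map h cs) (h c)") auto
      have "v' + k = v" using Fs v' less.prems(2) by simp
      moreover have "k > 0" using csne less.prems(1) by auto
      ultimately have "v' < v" by simp
      define ts' where "ts' = map h (filter P ts)"
      have lf: "length (filter P ts) \<le> k" using less.prems(4) length_filter_le[of P ts] by linarith
      have "length ts' \<le> k" using lf by (simp add: ts'_def)
      then have "\<exists>x'\<in>h ` S. F b ts' x' \<le> F b (map h cs) (h c)"
        by (intro less.IH[OF \<open>v' < v\<close> _ v' gs]) (use less.prems(1) in simp_all)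
      then obtain x' where x': "x' \<in> h ` S" "F b ts' x' \<le> F b (map h cs) (h c)"
        by blast
      obtain x where x: "x \<in> S" "x' = h x" using x' by auto
      have cx: "\<forall>y\<in>set (filter P ts). y mod b = x mod b" using x True P_def by auto
      have "F b ts x = F b (filter P ts) x" unfolding P_def by (rule F_filter) (use x True in auto)
      also have "\<dots> = F b ts' x' + enat (length (filter P ts))"
        using F_scale[OF cx] x by (simp add: ts'_def h_def)
      also have "\<dots> \<le> F b (map h cs) (h c) + enat k"
        using x'(2) lf by (intro add_mono) auto
      finally show ?thesis using Fs x by auto
    next
      case False
      then obtain z where z: "z \<in> S" "z mod b \<noteq> \<rho>" by auto
      have notall: "\<exists>y\<in>set cs. \<not> P y"
      proof (rule ccontr)
        assume "\<not> ?thesis"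
        then have all: "\<forall>y\<in>set cs. y mod b = \<rho>" by (auto simp: P_def)
        have Fz: "F b cs z = 0" using all z F_zero by auto
        obtain y ys where cs: "cs = y # ys" using csne by (cases cs) auto
        have "b dvd c - y" using all cs \<rho>_def mod_eq_dvd_iff by (metis list.set_intros(1))
        then have "1 \<le> ordb b (c - y)" using ordb_dvd_ge1 b by blast
        also have "\<dots> \<le> F b cs c" using cs by (simp add: F_Cons)
        finally have "1 \<le> F b cs c" .
        then show False using g(3) z(1) Fz by (metis not_one_le_zero order_trans)
      qed
      have nlt: "length (filter P cs) < k"
        using length_filter_less[OF _ _] notall less.prems(1) by (metis length_filter_less)
      show ?thesis
      proof (cases "length (filter P ts) \<le> length (filter P cs)")
        case True
        have gr: "greedy b {x\<in>S. x mod b = \<rho>} (filter P cs @ [c])"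
          using greedy_filter[OF less.prems(3), of \<rho>] by (simp add: P_def \<rho>_def)
        obtain x where x: "x \<in> {x\<in>S. x mod b = \<rho>}" "F b (filter P ts) x \<le> F b (filter P cs) c"
          using IHk[OF nlt gr True] by auto
        have "F b ts x = F b (filter P ts) x" unfolding P_def by (rule F_filter) (use x in auto)
        moreover have "F b cs c = F b (filter P cs) c" unfolding P_def by (rule F_filter) (simp add: \<rho>_def)
        ultimately show ?thesis using x(1) x(2) by (intro bexI[of _ x]) auto
      next
        case False
        define n where "n = (\<lambda>r. length (filter (\<lambda>x. x mod b = r) cs))"
        define m where "m = (\<lambda>r. length (filter (\<lambda>x. x mod b = r) ts))"
        have b0: "b > 0" using b by simp
        have rin: "\<rho> \<in> {0..<b}" using b0 \<rho>_def by simp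
        have lt: "n \<rho> < m \<rho>" using False by (simp add: n_def m_def P_def)
        obtain r where r: "r \<in> {0..<b}" "r \<noteq> \<rho>" "m r < n r"
        proof (rule ccontr)
          assume "\<not> thesis"
          then have ge: "\<forall>r\<in>{0..<b} - {\<rho>}. n r \<le> m r" using that by force
          have "(\<Sum>r\<in>{0..<b}. n r) = n \<rho> + (\<Sum>r\<in>{0..<b} - {\<rho>}. n r)"
            using rin by (simp add: sum.remove)
          also have "\<dots> < m \<rho> + (\<Sum>r\<in>{0..<b} - {\<rho>}. m r)"
            using lt sum_mono[of "{0..<b} - {\<rho>}" n m] ge by simp
          also have "\<dots> = (\<Sum>r\<in>{0..<b}. m r)"
            using rin by (simp add: sum.remove)
          finally have "(\<Sum>r\<in>{0..<b}. n r) < (\<Sum>r\<in>{0..<b}. m r)" .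
          moreover have "(\<Sum>r\<in>{0..<b}. n r) = k" using sum_classes[OF b0] less.prems(1) by (simp add: n_def)
          moreover have "(\<Sum>r\<in>{0..<b}. m r) = length ts" using sum_classes[OF b0] by (simp add: m_def)
          ultimately show False using less.prems(4) by simp
        qed
        define Q where "Q = (\<lambda>x::int. x mod b = r)"
        obtain j where j: "j < length cs" "Q (cs ! j)" "length (filter Q (take j cs)) = m r"
          using find_j[of "m r" Q cs] r(3) by (auto simp: n_def Q_def)
        have "greedy b S (take (Suc j) cs)" using greedy_take[OF g(1)] .
        then have "greedy b S (take j cs @ [cs ! j])" using j(1) by (simp add: take_Suc_conv_app_nth)
        then have gr: "greedy b {x\<in>S. x mod b = r} (filter Q (take j cs) @ [cs ! j])"
          using greedy_filter[of S _ r] j(2) by (fastforce simp: Q_def)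
        have "m r < k" using r(3) length_filter_le[of _ cs] less.prems(1) by (simp add: n_def) (metis le_trans not_le length_filter_le)
        then have l1: "length (filter Q (take j cs)) < k" using j(3) by simp
        obtain x where x: "x \<in> {x\<in>S. x mod b = r}" "F b (filter Q ts) x \<le> F b (filter Q (take j cs)) (cs ! j)"
          using IHk[OF l1 gr] j(3) by (auto simp: m_def Q_def)
        have "F b ts x = F b (filter Q ts) x" unfolding Q_def by (rule F_filter) (use x in auto)
        also have "\<dots> \<le> F b (filter Q (take j cs)) (cs ! j)" by fact
        also have "\<dots> = F b (take j cs) (cs ! j)" unfolding Q_def by (rule F_filter[symmetric]) (use j(2) Q_def in auto)
        also have "\<dots> = F b (take j (cs @ [c])) ((cs @ [c]) ! j)" using j(1) by (simp add: nth_append)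
        also have "\<dots> \<le> F b (take (length cs) (cs @ [c])) ((cs @ [c]) ! length cs)"
          using greedy_mono[OF less.prems(3), of j "length cs"] j(1) by simp
        also have "\<dots> = F b cs c" by simp
        finally show ?thesis using x by auto
      qed
    qed
  qed
qed

lemma K:
  "greedy b S (cs @ [c]) \<Longrightarrow> length ts \<le> length cs \<Longrightarrow> \<exists>x\<in>S. F b ts x \<le> F b cs c"
proof (induction "length cs" arbitrary: S cs c ts rule: less_induct)
  case less
  show ?case
  proof (cases "F b cs c")
    case (enat v)
    show ?thesis
      by (rule K_aux[OF _ refl enat less.prems(1) less.prems(2)]) (use less.hyps in blast)
  next
    case infinity
    then show ?thesis using less.prems by (auto simp: greedy_snoc)
  qed
qed

end

lemma F_upt: "F b (map a [0..<i]) x = (\<Sum>j<i. ordb b (x - a j))"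
  by (induction i) (simp_all add: F_append F_Cons add.commute)

lemma bord_min:
  assumes "b_ordering S b a" "x \<in> S"
  shows "F b (map a [0..<m]) (a m) \<le> F b (map a [0..<m]) x"
proof (cases "m = 0")
  case False
  then show ?thesis using assms unfolding b_ordering_def F_upt by auto
qed simp

lemma bord_greedy:
  assumes "b_ordering S b a"
  shows "greedy b S (map a [0..<n])"
proof (induction n)
  case 0 then show ?case by (simp add: greedy_def)
next
  case (Suc n)
  have "a n \<in> S" using assms by (simp add: b_ordering_def)
  then show ?case using Suc bord_min[OF assms] by (simp add: greedy_snoc)
qed

lemma Cmp:
  assumes b: "b \<ge> 2" and a: "b_ordering S2 b a" and c: "b_ordering S1 b c"
    and sub: "S1 \<subseteq> S2" and mk: "m \<le> k"
  shows "(\<Sum>j<m. ordb b (a m - a j)) \<le> (\<Sum>j<k. ordb b (c k - c j))"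
proof -
  have g: "greedy b S1 (map c [0..<k] @ [c k])" using bord_greedy[OF c, of "Suc k"] by simp
  obtain x where x: "x \<in> S1" "F b (map a [0..<m]) x \<le> F b (map c [0..<k]) (c k)"
    using K[OF b g, of "map a [0..<m]"] mk by auto
  have "F b (map a [0..<m]) (a m) \<le> F b (map a [0..<m]) x"
    using bord_min[OF a] x(1) sub by auto
  from this x(2) have "F b (map a [0..<m]) (a m) \<le> F b (map c [0..<k]) (c k)" by (rule order_trans)
  then show ?thesis by (simp add: F_upt)
qed

lemma SA:
  assumes b: "b \<ge> 2" and a: "b_ordering S b a"
  shows "(\<Sum>j<k. ordb b (a k - a j)) + (\<Sum>j<l. ordb b (a l - a j)) \<le> (\<Sum>j<k+l. ordb b (a (k+l) - a j))"
proof -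
  have g: "greedy b S (map a [0..<k+l] @ [a (k+l)])" using bord_greedy[OF a, of "Suc (k+l)"] by simp
  obtain x where x: "x \<in> S" "F b (map a [0..<k] @ map a [0..<l]) x \<le> F b (map a [0..<k+l]) (a (k+l))"
    using K[OF b g, of "map a [0..<k] @ map a [0..<l]"] by auto
  have "F b (map a [0..<k]) (a k) + F b (map a [0..<l]) (a l) \<le> F b (map a [0..<k]) x + F b (map a [0..<l]) x"
    using bord_min[OF a x(1)] by (intro add_mono) auto
  also have "\<dots> = F b (map a [0..<k] @ map a [0..<l]) x" by (simp add: F_append)
  also have "\<dots> \<le> F b (map a [0..<k+l]) (a (k+l))" by (rule x(2))
  finally show ?thesis by (simp add: F_upt)
qed

definition pick :: "int \<Rightarrow> int set \<Rightarrow> int list \<Rightarrow> int" where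
  "pick b S xs = (SOME x. x \<in> S \<and> (\<forall>y\<in>S. F b xs x \<le> F b xs y))"

lemma pick_spec:
  assumes "S \<noteq> {}"
  shows "pick b S xs \<in> S \<and> (\<forall>y\<in>S. F b xs (pick b S xs) \<le> F b xs y)"
proof -
  define v where "v = (LEAST v. v \<in> F b xs ` S)"
  have "\<exists>v. v \<in> F b xs ` S" using assms by auto
  then have "v \<in> F b xs ` S" unfolding v_def by (rule LeastI_ex)
  then obtain x where x: "x \<in> S" "F b xs x = v" by auto
  have "\<forall>y\<in>S. v \<le> F b xs y" unfolding v_def by (auto intro: Least_le)
  then have "\<exists>x. x \<in> S \<and> (\<forall>y\<in>S. F b xs x \<le> F b xs y)" using x by auto
  then show ?thesis unfolding pick_def by (rule someI_ex)
qed

primrec Lseq :: "int \<Rightarrow> int set \<Rightarrow> nat \<Rightarrow> int list" where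
  "Lseq b S 0 = []"
| "Lseq b S (Suc n) = Lseq b S n @ [pick b S (Lseq b S n)]"

lemma bord_exists:
  fixes S :: "int set"
  assumes "S \<noteq> {}"
  shows "\<exists>a. b_ordering S b a"
proof -
  define a where "a = (\<lambda>n. pick b S (Lseq b S n))"
  have L: "map a [0..<n] = Lseq b S n" for n
    by (induction n) (simp_all add: a_def)
  have "b_ordering S b a"
    unfolding b_ordering_def
  proof (intro conjI allI impI ballI)
    fix i show "a i \<in> S" using pick_spec[OF assms] by (simp add: a_def)
  next
    fix i :: nat and y assume "1 \<le> i" "y \<in> S"
    have ai: "a i = pick b S (Lseq b S i)" by (simp add: a_def)
    have "F b (map a [0..<i]) (a i) \<le> F b (map a [0..<i]) y"
      unfolding L ai using pick_spec[OF assms, of b "Lseq b S i"] \<open>y \<in> S\<close> by blast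
    then show "(\<Sum>j<i. ordb b (a i - a j)) \<le> (\<Sum>j<i. ordb b (y - a j))" by (simp add: F_upt)
  qed
  then show ?thesis by blast
qed

lemma alpha_spec:
  fixes S :: "int set"
  assumes "S \<noteq> {}"
  shows "\<exists>a. b_ordering S b a \<and> alpha S b k = (\<Sum>j<k. ordb b (a k - a j))"
proof -
  obtain a where "b_ordering S b a" using bord_exists[OF assms] by blast
  then have "\<exists>v a. b_ordering S b a \<and> v = (\<Sum>j<k. ordb b (a k - a j))" by blast
  from someI_ex[OF this] show ?thesis unfolding alpha_def by blast
qed

theorem proposition5p4:
  fixes b :: int
  assumes "b \<ge> 2"
  shows "(\<forall>S. S \<noteq> {} \<longrightarrow> (\<forall>k. alpha S b (Suc k) \<ge> alpha S b k))
       \<and> (\<forall>S. S \<noteq> {} \<longrightarrow> (\<forall>k l. alpha S b (k + l) \<ge> alpha S b k + alpha S b l))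
       \<and> (\<forall>S1 S2. S1 \<noteq> {} \<and> S1 \<subseteq> S2 \<longrightarrow> (\<forall>k. alpha S1 b k \<ge> alpha S2 b k))"
proof (intro conjI allI impI)
  fix S :: "int set" and k assume S: "S \<noteq> {}"
  obtain a where a: "b_ordering S b a" "alpha S b (Suc k) = (\<Sum>j<Suc k. ordb b (a (Suc k) - a j))"
    using alpha_spec[OF S] by blast
  obtain c where c: "b_ordering S b c" "alpha S b k = (\<Sum>j<k. ordb b (c k - c j))"
    using alpha_spec[OF S] by blast
  show "alpha S b k \<le> alpha S b (Suc k)"
    unfolding a(2) c(2) by (rule Cmp[OF assms c(1) a(1)]) auto
next
  fix S :: "int set" and k l assume S: "S \<noteq> {}"
  obtain a where a: "b_ordering S b a" "alpha S b (k + l) = (\<Sum>j<k+l. ordb b (a (k+l) - a j))"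
    using alpha_spec[OF S] by blast
  obtain c where c: "b_ordering S b c" "alpha S b k = (\<Sum>j<k. ordb b (c k - c j))"
    using alpha_spec[OF S] by blast
  obtain d where d: "b_ordering S b d" "alpha S b l = (\<Sum>j<l. ordb b (d l - d j))"
    using alpha_spec[OF S] by blast
  have 1: "alpha S b k \<le> (\<Sum>j<k. ordb b (a k - a j))"
    unfolding c(2) by (rule Cmp[OF assms c(1) a(1)]) auto
  have 2: "alpha S b l \<le> (\<Sum>j<l. ordb b (a l - a j))"
    unfolding d(2) by (rule Cmp[OF assms d(1) a(1)]) auto
  have "alpha S b k + alpha S b l \<le> (\<Sum>j<k. ordb b (a k - a j)) + (\<Sum>j<l. ordb b (a l - a j))"
    using 1 2 by (rule add_mono)
  also have "\<dots> \<le> alpha S b (k + l)" unfolding a(2) by (rule SA[OF assms a(1)])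
  finally show "alpha S b k + alpha S b l \<le> alpha S b (k + l)" .
next
  fix S1 S2 :: "int set" and k assume S: "S1 \<noteq> {} \<and> S1 \<subseteq> S2"
  then have S2: "S2 \<noteq> {}" by auto
  obtain a where a: "b_ordering S1 b a" "alpha S1 b k = (\<Sum>j<k. ordb b (a k - a j))"
    using alpha_spec S by blast
  obtain c where c: "b_ordering S2 b c" "alpha S2 b k = (\<Sum>j<k. ordb b (c k - c j))"
    using alpha_spec[OF S2] by blast
  show "alpha S2 b k \<le> alpha S1 b k"
    unfolding a(2) c(2) by (rule Cmp[OF assms c(1) a(1)]) (use S in auto)
qed

end
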